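(* Let $\mu$ be a probability measure on $\mathbb{R}$ with characteristic function $\varphi(t)=\int e^{itx}\mu(dx)$, and let $(S_n)$ be a random walk with $S_0=0$ and step distribution $\mu$. Assume there is $\alpha>0$ such that $\mathbb{P}(S_n<0)\le e^{-\alpha n}$ along some subsequence of $n$. Then for all $t\in\mathbb{R}$ with $|\varphi(t)|>e^{-\alpha}$, along this subsequence, $$\lim_{n\to\infty}\mathbb{E}\big(e^{itS_n}\mathbf{1}_{\{S_n\ge0\}}\big)^{1/n}=\varphi(t).$$ In particular, under this assumption $\varphi$ is determined on some neighborhood of $0$ by the restrictions of the laws of $S_n$ to $[0,\infty)$. *)

theory Defs
  imports "HOL-Probability.Probability"
begin

text \<open>Law of the random walk S_n with S_0 = 0 and step distribution mu:
  the n-fold convolution power of mu (the law of S_0 is the Dirac measure at 0).\<close>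
primrec conv_pow :: "real measure \<Rightarrow> nat \<Rightarrow> real measure" where
  "conv_pow M 0 = return borel 0"
| "conv_pow M (Suc n) = convolution M (conv_pow M n)"

definition pos_char :: "real measure \<Rightarrow> nat \<Rightarrow> real \<Rightarrow> complex" where
  "pos_char M n t = (CLINT x | conv_pow M n. indicator {0..} x * iexp (t * x))"

end

theory Submission
  imports Defs
begin


lemma rd_conv_pow:
  assumes "real_distribution M" shows "real_distribution (conv_pow M n)"
proof (induction n)
  case 0
  show ?case unfolding real_distribution_def real_distribution_axioms_def
    by (auto intro!: prob_space_return)
next
  case (Suc n)
  interpret A: real_distribution M by fact
  interpret B: real_distribution "conv_pow M n" by fact
  have "prob_space (M \<Otimes>\<^sub>M conv_pow M n)"
    by (intro prob_space_pair) (simp_all add: A.prob_space_axioms B.prob_space_axioms)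
  then have "prob_space (convolution M (conv_pow M n))"
    unfolding convolution_def
    by (rule prob_space.prob_space_distr) (simp add: measurable_pair_measure)
  then show ?case unfolding real_distribution_def real_distribution_axioms_def by simp
qed

lemma sets_conv_pow[simp]: "sets (conv_pow M n) = sets borel"
  by (cases n) auto

lemma char_convolution:
  assumes M: "real_distribution M" and N: "real_distribution N"
  shows "char (convolution M N) t = char M t * char N t"
proof -
  interpret M: real_distribution M by fact
  interpret N: real_distribution N by fact
  interpret P: pair_sigma_finite M N
    by (simp add: pair_sigma_finite_def M.sigma_finite_measure N.sigma_finite_measure)
  interpret PP: prob_space "M \<Otimes>\<^sub>M N"
    by (intro prob_space_pair) (simp_all add: M.prob_space_axioms N.prob_space_axioms)
  have ms[measurable_cong]: "sets M = sets borel" "sets N = sets borel" by simp_all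
  have int: "integrable (M \<Otimes>\<^sub>M N) (\<lambda>p. iexp (t * fst p) * iexp (t * snd p))"
  proof (rule PP.integrable_const_bound[where B=1])
    show "AE x in M \<Otimes>\<^sub>M N. norm (iexp (t * fst x) * iexp (t * snd x)) \<le> 1"
      by (simp add: norm_mult)
    show "(\<lambda>p. iexp (t * fst p) * iexp (t * snd p)) \<in> borel_measurable (M \<Otimes>\<^sub>M N)"
      by measurable
  qed
  have "char (convolution M N) t = (CLINT p|M \<Otimes>\<^sub>M N. iexp (t * (fst p + snd p)))"
    unfolding char_def convolution_def
    by (subst integral_distr) (auto simp: case_prod_beta)
  also have "\<dots> = (CLINT p|M \<Otimes>\<^sub>M N. iexp (t * fst p) * iexp (t * snd p))"
    by (simp add: distrib_left exp_add)
  also have "\<dots> = (CLINT x|M. (CLINT y|N. iexp (t * fst (x,y)) * iexp (t * snd (x,y))))"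
    using P.integral_fst'[OF int] by simp
  also have "\<dots> = (CLINT x|M. iexp (t * x) * char N t)"
    by (simp add: char_def)
  also have "\<dots> = char M t * char N t"
    by (simp add: char_def)
  finally show ?thesis .
qed

lemma char_conv_pow:
  assumes "real_distribution M" shows "char (conv_pow M n) t = char M t ^ n"
proof (induction n)
  case 0
  show ?case by (simp add: char_def integral_return)
next
  case (Suc n)
  then show ?case
    using char_convolution[OF assms rd_conv_pow[OF assms, of n]] by simp
qed

lemma char_split:
  assumes "real_distribution N"
  shows "cmod (char N t - (CLINT x|N. indicator {0..} x * iexp (t * x))) \<le> measure N {..<0}"
proof -
  interpret N: real_distribution N by fact
  have i1: "integrable N (\<lambda>x. iexp (t * x))" by (rule N.integrable_iexp) auto
  have i2: "integrable N (\<lambda>x. indicator {0..} x * iexp (t * x) :: complex)"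
    by (rule N.integrable_const_bound[where B=1]) (auto simp: norm_mult split: split_indicator)
  have "char N t - (CLINT x|N. indicator {0..} x * iexp (t * x)) =
        (CLINT x|N. iexp (t * x) - indicator {0..} x * iexp (t * x))"
    unfolding char_def using i1 i2 by simp
  also have "\<dots> = (CLINT x|N. indicator {..<0} x * iexp (t * x))"
    by (rule Bochner_Integration.integral_cong) (auto split: split_indicator)
  finally have eq: "char N t - (CLINT x|N. indicator {0..} x * iexp (t * x)) =
        (CLINT x|N. indicator {..<0} x * iexp (t * x))" .
  have "cmod (CLINT x|N. indicator {..<0} x * iexp (t * x)) \<le> (\<integral>x. norm (indicator {..<0} x * iexp (t * x) :: complex) \<partial>N)"
    by (rule integral_norm_bound)
  also have "\<dots> = (\<integral>x. indicator {..<0} x \<partial>N)"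
    by (rule Bochner_Integration.integral_cong) (auto simp: norm_mult split: split_indicator)
  also have "\<dots> = measure N {..<0}" by simp
  finally show ?thesis using eq by simp
qed

lemma pos_eq:
  assumes M: "real_distribution M" and N: "real_distribution N"
    and eq: "\<forall>A \<in> sets borel. A \<subseteq> {0..} \<longrightarrow> measure M A = measure N A"
  shows "(CLINT x|M. indicator {0..} x * iexp (t * x)) = (CLINT x|N. indicator {0..} x * iexp (t * x))"
proof -
  interpret M: real_distribution M by fact
  interpret N: real_distribution N by fact
  let ?g = "\<lambda>x::real. indicator {0..} x :: real"
  have dens: "density M (\<lambda>x. ennreal (?g x)) = density N (\<lambda>x. ennreal (?g x))"
  proof (rule measure_eqI)
    show "sets (density M (\<lambda>x. ennreal (?g x))) = sets (density N (\<lambda>x. ennreal (?g x)))" by simp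
    fix A assume A: "A \<in> sets (density M (\<lambda>x. ennreal (?g x)))"
    then have Ab: "A \<in> sets borel" by simp
    have *: "\<And>K. real_distribution K \<Longrightarrow> emeasure (density K (\<lambda>x. ennreal (?g x))) A = ennreal (measure K ({0..} \<inter> A))"
    proof -
      fix K assume K: "real_distribution K"
      interpret K: real_distribution K by fact
      have "emeasure (density K (\<lambda>x. ennreal (?g x))) A = (\<integral>\<^sup>+ x. ennreal (?g x) * indicator A x \<partial>K)"
        by (rule emeasure_density) (simp_all add: Ab)
      also have "\<dots> = (\<integral>\<^sup>+ x. indicator ({0..} \<inter> A) x \<partial>K)"
        by (rule nn_integral_cong) (auto split: split_indicator)
      also have "\<dots> = emeasure K ({0..} \<inter> A)"
        using Ab by (intro nn_integral_indicator) simp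
      also have "\<dots> = ennreal (measure K ({0..} \<inter> A))"
        by (simp add: K.emeasure_eq_measure)
      finally show "emeasure (density K (\<lambda>x. ennreal (?g x))) A = ennreal (measure K ({0..} \<inter> A))" .
    qed
    have "measure M ({0..} \<inter> A) = measure N ({0..} \<inter> A)"
      using eq Ab by auto
    then show "emeasure (density M (\<lambda>x. ennreal (?g x))) A = emeasure (density N (\<lambda>x. ennreal (?g x))) A"
      using *[OF M] *[OF N] by simp
  qed
  have **: "\<And>K. real_distribution K \<Longrightarrow> (CLINT x|K. indicator {0..} x * iexp (t * x)) = (CLINT x|density K (\<lambda>x. ennreal (?g x)). iexp (t * x))"
  proof -
    fix K assume K: "real_distribution K"
    interpret K: real_distribution K by fact
    have "(CLINT x|density K (\<lambda>x. ennreal (?g x)). iexp (t * x)) = (CLINT x|K. ?g x *\<^sub>R iexp (t * x))"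
      by (rule integral_density) auto
    also have "\<dots> = (CLINT x|K. indicator {0..} x * iexp (t * x))"
      by (rule Bochner_Integration.integral_cong) (auto split: split_indicator)
    finally show "(CLINT x|K. indicator {0..} x * iexp (t * x)) = (CLINT x|density K (\<lambda>x. ennreal (?g x)). iexp (t * x))" by simp
  qed
  show ?thesis using **[OF M] **[OF N] dens by simp
qed

lemma exp_near1:
  fixes z :: complex
  assumes "cmod (exp z - 1) < 1/4"
  shows "cmod z < 1 \<or> cmod z > 2"
proof -
  let ?w = "exp z"
  have w0: "?w \<noteq> 0" by simp
  have lnb: "cmod (Ln ?w) \<le> 1/2"
  proof -
    have "cmod (Ln (1 + (?w - 1))) \<le> 2 * cmod (?w - 1)"
      by (rule norm_Ln_le) (use assms in simp)
    then show ?thesis using assms by simp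
  qed
  have "exp z = exp (Ln ?w)" by simp
  then obtain n :: int where n: "z = Ln ?w + (of_int (2 * n) * pi) * \<i>"
    unfolding exp_eq by blast
  show ?thesis
  proof (cases "n = 0")
    case True
    then show ?thesis using n lnb by simp
  next
    case False
    have "cmod ((of_int (2 * n) * pi) * \<i>) = \<bar>2 * real_of_int n\<bar> * pi"
      by (simp add: norm_mult)
    also have "\<dots> \<ge> 2 * pi"
    proof -
      have "\<bar>real_of_int n\<bar> \<ge> 1" using False by linarith
      then show ?thesis using pi_gt3 by (simp add: abs_mult)
    qed
    finally have big: "cmod ((of_int (2 * n) * pi) * \<i>) \<ge> 2 * pi" .
    have e: "(of_int (2 * n) * pi) * \<i> = z - Ln ?w" using n by (simp add: algebra_simps)
    have "cmod ((of_int (2 * n) * pi) * \<i>) \<le> cmod z + cmod (Ln ?w)"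
      unfolding e by (rule norm_triangle_ineq4)
    then show ?thesis using big lnb pi_gt3 by linarith
  qed
qed

lemma diff_bound:
  assumes mu: "real_distribution \<mu>"
  shows "cmod (char \<mu> t ^ n - pos_char \<mu> n t) \<le> measure (conv_pow \<mu> n) {..<0}"
  using char_split[OF rd_conv_pow[OF mu, of n], of t] char_conv_pow[OF mu, of n t]
  by (simp add: pos_char_def)


lemma part1:
  fixes \<mu> :: "real measure" and \<alpha> :: real and r :: "nat \<Rightarrow> nat"
  assumes mu: "real_distribution \<mu>"
    and "\<alpha> > 0"
    and r: "strict_mono r"
    and hyp: "\<And>k. measure (conv_pow \<mu> (r k)) {..<0} \<le> exp (- \<alpha> * real (r k))"
    and big: "cmod (char \<mu> t) > exp (- \<alpha>)"
  shows "\<exists>z :: nat \<Rightarrow> complex.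
              (\<forall>\<^sub>F k in sequentially. z k ^ r k = pos_char \<mu> (r k) t) \<and>
              z \<longlonglongrightarrow> char \<mu> t"
proof -
  define \<phi> where "\<phi> = char \<mu> t"
  have pos\<phi>: "cmod \<phi> > 0" using big unfolding \<phi>_def by (meson exp_gt_zero less_trans)
  then have \<phi>0: "\<phi> \<noteq> 0" by auto
  define c where "c = exp (- \<alpha>) / cmod \<phi>"
  have c0: "c \<ge> 0" unfolding c_def using pos\<phi> by simp
  have c1: "c < 1" unfolding c_def using pos\<phi> big \<phi>_def by simp
  define q where "q k = pos_char \<mu> (r k) t / \<phi> ^ r k" for k
  have qb: "cmod (q k - 1) \<le> c ^ r k" for k
  proof -
    have "cmod (\<phi> ^ r k - pos_char \<mu> (r k) t) \<le> exp (- \<alpha> * real (r k))"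
      using diff_bound[OF mu, of t "r k"] hyp[of k] unfolding \<phi>_def by linarith
    also have "\<dots> = exp (- \<alpha>) ^ r k"
      using exp_of_nat_mult[of "r k" "- \<alpha>"] by (simp add: mult.commute)
    finally have a0: "cmod (\<phi> ^ r k - pos_char \<mu> (r k) t) \<le> exp (- \<alpha>) ^ r k" .
    have a: "cmod (pos_char \<mu> (r k) t - \<phi> ^ r k) \<le> exp (- \<alpha>) ^ r k"
      using a0 norm_minus_commute[of "\<phi> ^ r k" "pos_char \<mu> (r k) t"] by linarith
    have "q k - 1 = (pos_char \<mu> (r k) t - \<phi> ^ r k) / \<phi> ^ r k"
      unfolding q_def using \<phi>0 by (simp add: diff_divide_distrib)
    then have "cmod (q k - 1) = cmod (pos_char \<mu> (r k) t - \<phi> ^ r k) / cmod \<phi> ^ r k"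
      by (simp only: norm_divide norm_power)
    also have "\<dots> \<le> exp (- \<alpha>) ^ r k / cmod \<phi> ^ r k"
      by (rule divide_right_mono[OF a]) simp
    also have "\<dots> = c ^ r k" unfolding c_def by (simp only: power_divide)
    finally show ?thesis .
  qed
  have "(\<lambda>n. c ^ n) \<longlonglongrightarrow> 0" by (rule LIMSEQ_power_zero) (use c0 c1 in simp)
  then have "((\<lambda>n. c ^ n) \<circ> r) \<longlonglongrightarrow> 0" using r by (rule LIMSEQ_subseq_LIMSEQ)
  then have "(\<lambda>k. c ^ r k) \<longlonglongrightarrow> 0" by (simp only: o_def)
  then have "(\<lambda>k. q k - 1) \<longlonglongrightarrow> 0"
    by (rule Lim_null_comparison[rotated]) (simp add: qb)
  from tendsto_add[OF this tendsto_const[of 1]] have q1: "q \<longlonglongrightarrow> 1"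
    by simp
  then have "(\<lambda>k. Ln (q k)) \<longlonglongrightarrow> Ln 1"
    by (rule tendsto_Ln) (simp add: complex_nonpos_Reals_iff)
  then have L0: "(\<lambda>k. Ln (q k)) \<longlonglongrightarrow> 0" by simp
  have rpos: "r k \<ge> k" for k using r by (rule strict_mono_imp_increasing)
  have "(\<lambda>k. Ln (q k) / of_nat (r k)) \<longlonglongrightarrow> 0"
  proof (rule Lim_null_comparison[where g="\<lambda>k. cmod (Ln (q k))"])
    show "\<forall>\<^sub>F k in sequentially. norm (Ln (q k) / of_nat (r k)) \<le> cmod (Ln (q k))"
    proof (rule eventually_sequentiallyI[of 1])
      fix k :: nat assume "1 \<le> k"
      then have "real (r k) \<ge> 1" using rpos[of k] by simp
      then show "norm (Ln (q k) / of_nat (r k)) \<le> cmod (Ln (q k))"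
        by (simp add: norm_divide divide_le_eq mult_le_cancel_left1)
    qed
    show "(\<lambda>k. cmod (Ln (q k))) \<longlonglongrightarrow> 0" using tendsto_norm[OF L0] by simp
  qed
  then have "(\<lambda>k. exp (Ln (q k) / of_nat (r k))) \<longlonglongrightarrow> exp 0" by (rule tendsto_exp)
  from tendsto_mult[OF tendsto_const[of \<phi>] this]
  have zl: "(\<lambda>k. \<phi> * exp (Ln (q k) / of_nat (r k))) \<longlonglongrightarrow> \<phi>" by simp
  have ev: "\<forall>\<^sub>F k in sequentially. q k \<noteq> 0"
    using q1 by (rule tendsto_imp_eventually_ne) simp
  have "\<forall>\<^sub>F k in sequentially. (\<phi> * exp (Ln (q k) / of_nat (r k))) ^ r k = pos_char \<mu> (r k) t"
  proof -
    have "\<forall>\<^sub>F k in sequentially. q k \<noteq> 0 \<and> k \<ge> 1"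
      using ev eventually_ge_at_top by (rule eventually_conj)
    then show ?thesis
    proof (rule eventually_mono)
      fix k :: nat assume k: "q k \<noteq> 0 \<and> k \<ge> 1"
      then have rk: "r k \<noteq> 0" using rpos[of k] by simp
      have "(\<phi> * exp (Ln (q k) / of_nat (r k))) ^ r k = \<phi> ^ r k * exp (Ln (q k) / of_nat (r k)) ^ r k"
        by (simp only: power_mult_distrib)
      also have "\<dots> = \<phi> ^ r k * exp (of_nat (r k) * (Ln (q k) / of_nat (r k)))"
        by (simp only: exp_of_nat_mult)
      also have "\<dots> = \<phi> ^ r k * q k" using rk k by simp
      also have "\<dots> = pos_char \<mu> (r k) t" unfolding q_def using \<phi>0 by simp
      finally show "(\<phi> * exp (Ln (q k) / of_nat (r k))) ^ r k = pos_char \<mu> (r k) t" .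
    qed
  qed
  then show ?thesis using zl unfolding \<phi>_def
    by (intro exI[where x="\<lambda>k. char \<mu> t * exp (Ln (q k) / of_nat (r k))"] conjI)
qed


lemma part2:
  fixes \<mu> :: "real measure" and \<alpha> :: real and r :: "nat \<Rightarrow> nat"
  assumes mu: "real_distribution \<mu>"
    and al: "\<alpha> > 0"
    and r: "strict_mono r"
    and hyp: "\<And>k. measure (conv_pow \<mu> (r k)) {..<0} \<le> exp (- \<alpha> * real (r k))"
  shows "\<exists>U. open U \<and> 0 \<in> U \<and>
           (\<forall>\<nu>. real_distribution \<nu> \<longrightarrow>
              (\<forall>k. \<forall>A \<in> sets borel. A \<subseteq> {0..} \<longrightarrow>
                  measure (conv_pow \<nu> (r k)) A = measure (conv_pow \<mu> (r k)) A) \<longrightarrow>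
              (\<forall>t\<in>U. char \<nu> t = char \<mu> t))"
proof -
  interpret M: real_distribution \<mu> by fact
  define e where "e = exp (- \<alpha> / 2)"
  have e0: "e > 0" unfolding e_def by simp
  have e1: "e < 1" unfolding e_def using al by simp
  have ee: "exp (- \<alpha>) = e * e" unfolding e_def by (simp flip: exp_add)
  have "continuous (at 0) (char \<mu>)" using M.isCont_char by blast
  then obtain \<delta> where d0: "\<delta> > 0" and dd: "\<And>t. dist t 0 < \<delta> \<Longrightarrow> dist (char \<mu> t) (char \<mu> 0) < 1 - e"
    unfolding continuous_at_eps_delta using e1 by (metis diff_gt_0_iff_gt)
  have lowb: "cmod (char \<mu> t) > e" if "t \<in> ball 0 \<delta>" for t
  proof -
    have "cmod (char \<mu> t - 1) < 1 - e" using dd[of t] that M.char_zero by (simp add: dist_norm)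
    moreover have "1 \<le> cmod (char \<mu> t) + cmod (char \<mu> t - 1)"
      using norm_triangle_ineq4[of "char \<mu> t" "char \<mu> t - 1"] by simp
    ultimately show ?thesis by linarith
  qed
  have nz: "char \<mu> t \<noteq> 0" if "t \<in> ball 0 \<delta>" for t using lowb[OF that] e0 by auto
  have rpos: "r k \<ge> k" for k using r by (rule strict_mono_imp_increasing)
  have "(\<lambda>n. e ^ n) \<longlonglongrightarrow> 0" by (rule LIMSEQ_power_zero) (use e0 e1 in simp)
  then have "((\<lambda>n. e ^ n) \<circ> r) \<longlonglongrightarrow> 0" using r by (rule LIMSEQ_subseq_LIMSEQ)
  then have "(\<lambda>k. e ^ r k) \<longlonglongrightarrow> 0" by (simp only: o_def)
  from tendsto_mult[OF tendsto_const[of 2] this]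
  have "(\<lambda>k. 2 * e ^ r k) \<longlonglongrightarrow> 0" by simp
  then have evsmall: "\<forall>\<^sub>F k in sequentially. 2 * e ^ r k < 1/4"
    by (rule order_tendstoD(2)) simp
  have "(\<lambda>n. inverse (of_nat n) :: real) \<longlonglongrightarrow> 0" by (rule lim_inverse_n)
  then have "((\<lambda>n. inverse (of_nat n) :: real) \<circ> r) \<longlonglongrightarrow> 0" using r by (rule LIMSEQ_subseq_LIMSEQ)
  then have invr: "(\<lambda>k. inverse (real (r k))) \<longlonglongrightarrow> 0" by (simp only: o_def)
  show ?thesis
  proof (intro exI[of _ "ball 0 \<delta>"] conjI allI impI ballI)
    show "open (ball (0::real) \<delta>)" by simp
    show "(0::real) \<in> ball 0 \<delta>" using d0 by simp
    fix \<nu> and t :: real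
    assume nu: "real_distribution \<nu>"
      and eq: "\<forall>k. \<forall>A \<in> sets borel. A \<subseteq> {0..} \<longrightarrow>
                  measure (conv_pow \<nu> (r k)) A = measure (conv_pow \<mu> (r k)) A"
      and tU: "t \<in> ball 0 \<delta>"
    interpret N: real_distribution \<nu> by fact
    let ?U = "ball (0::real) \<delta>"
    define a where "a s = char \<nu> s / char \<mu> s" for s
    have negeq: "measure (conv_pow \<nu> (r k)) {..<0} = measure (conv_pow \<mu> (r k)) {..<0}" for k
    proof -
      have *: "measure (conv_pow K (r k)) {..<0} = 1 - measure (conv_pow K (r k)) {0..}"
        if K: "real_distribution K" for K
      proof -
        interpret P: real_distribution "conv_pow K (r k)" by (rule rd_conv_pow[OF K])
        have "{..<0::real} = space (conv_pow K (r k)) - {0..}" by auto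
        then show ?thesis using P.prob_compl[of "{0..}"] by simp
      qed
      show ?thesis using *[OF nu] *[OF mu] eq by simp
    qed
    have poseq: "pos_char \<nu> (r k) s = pos_char \<mu> (r k) s" for k s
      unfolding pos_char_def
      by (rule pos_eq[OF rd_conv_pow[OF nu] rd_conv_pow[OF mu]]) (use eq in auto)
    have D: "cmod (char \<nu> s ^ r k - char \<mu> s ^ r k) \<le> 2 * exp (- \<alpha>) ^ r k" for k s
    proof -
      have b: "exp (- \<alpha> * real (r k)) = exp (- \<alpha>) ^ r k"
        using exp_of_nat_mult[of "r k" "- \<alpha>"] by (simp add: mult.commute)
      have d1: "cmod (char \<nu> s ^ r k - pos_char \<nu> (r k) s) \<le> exp (- \<alpha>) ^ r k"
        using diff_bound[OF nu, of s "r k"] negeq[of k] hyp[of k] b by linarith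
      have d2: "cmod (char \<mu> s ^ r k - pos_char \<mu> (r k) s) \<le> exp (- \<alpha>) ^ r k"
        using diff_bound[OF mu, of s "r k"] hyp[of k] b by linarith
      have "char \<nu> s ^ r k - char \<mu> s ^ r k =
          (char \<nu> s ^ r k - pos_char \<nu> (r k) s) - (char \<mu> s ^ r k - pos_char \<mu> (r k) s)"
        using poseq[of k s] by simp
      then have "cmod (char \<nu> s ^ r k - char \<mu> s ^ r k) \<le>
          cmod (char \<nu> s ^ r k - pos_char \<nu> (r k) s) + cmod (char \<mu> s ^ r k - pos_char \<mu> (r k) s)"
        by (metis norm_triangle_ineq4)
      then show ?thesis using d1 d2 by linarith
    qed
    have aD: "cmod (a s ^ r k - 1) \<le> 2 * e ^ r k" if s: "s \<in> ?U" for k s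
    proof -
      have p: "cmod (char \<mu> s) ^ r k \<ge> e ^ r k" using lowb[OF s] e0 by (intro power_mono) auto
      have pe: "e ^ r k > 0" using e0 by simp
      have "a s ^ r k - 1 = (char \<nu> s ^ r k - char \<mu> s ^ r k) / char \<mu> s ^ r k"
        unfolding a_def using nz[OF s] by (simp add: power_divide diff_divide_distrib)
      then have "cmod (a s ^ r k - 1) = cmod (char \<nu> s ^ r k - char \<mu> s ^ r k) / cmod (char \<mu> s) ^ r k"
        by (simp only: norm_divide norm_power)
      also have "\<dots> \<le> 2 * exp (- \<alpha>) ^ r k / e ^ r k"
        by (rule frac_le) (use D[of s k] p pe in auto)
      also have "\<dots> = 2 * e ^ r k" unfolding ee using pe by (simp add: power_mult_distrib)
      finally show ?thesis .
    qed
    have B: "\<forall>\<^sub>F k in sequentially. \<forall>s\<in>?U. cmod (a s ^ r k - 1) < 1/4"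
    proof (rule eventually_mono[OF evsmall])
      fix k assume "2 * e ^ r k < 1/4"
      then show "\<forall>s\<in>?U. cmod (a s ^ r k - 1) < 1/4" using aD by (meson le_less_trans)
    qed
    then obtain K where K: "\<And>k s. k \<ge> K \<Longrightarrow> s \<in> ?U \<Longrightarrow> cmod (a s ^ r k - 1) < 1/4"
      unfolding eventually_sequentially by blast
    have anz: "a s \<noteq> 0" if s: "s \<in> ?U" for s
    proof
      assume "a s = 0"
      moreover have "r (Suc K) \<noteq> 0" using rpos[of "Suc K"] by simp
      ultimately have "a s ^ r (Suc K) = 0" by simp
      then have "cmod (a s ^ r (Suc K) - 1) = 1" by (simp add: power_0_left)
      moreover have "cmod (a s ^ r (Suc K) - 1) < 1/4" using K[of "Suc K" s] s by simp
      ultimately show False by linarith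
    qed
    have conta: "continuous_on ?U a"
    proof -
      have "continuous_on ?U (char \<nu>)" by (intro continuous_at_imp_continuous_on ballI N.isCont_char)
      moreover have "continuous_on ?U (char \<mu>)" by (intro continuous_at_imp_continuous_on ballI M.isCont_char)
      ultimately show ?thesis unfolding a_def using nz by (intro continuous_on_divide) auto
    qed
    obtain g where gc: "continuous_on ?U g" and ga: "\<And>z. z \<in> ?U \<Longrightarrow> a z = exp (g z)"
      using continuous_logarithm_on_ball[OF conta anz] by blast
    define h where "h s = g s - g 0" for s
    have zU: "0 \<in> ?U" using d0 by simp
    have a0: "a 0 = 1" unfolding a_def using M.char_zero N.char_zero by simp
    have ha: "a s = exp (h s)" if "s \<in> ?U" for s
    proof -
      have "exp (g 0) = 1" using ga[OF zU] a0 by simp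
      then show ?thesis unfolding h_def using ga[OF that] by (simp add: exp_diff)
    qed
    have hc: "continuous_on ?U h" unfolding h_def by (intro continuous_on_diff gc continuous_on_const)
    have h0: "h 0 = 0" unfolding h_def by simp
    have small: "cmod (of_nat (r k) * h t) < 1" if k: "k \<ge> K" for k
    proof -
      let ?f = "\<lambda>s. of_nat (r k) * h s"
      let ?S = "?f ` ?U"
      have cS: "connected ?S"
        by (rule connected_continuous_image) (auto intro!: continuous_on_mult continuous_on_const hc)
      have sub: "?S \<subseteq> ball 0 1 \<union> - cball 0 2"
      proof
        fix w assume "w \<in> ?S"
        then obtain s where s: "s \<in> ?U" and w: "w = ?f s" by blast
        have "exp w = a s ^ r k" unfolding w ha[OF s] by (simp add: exp_of_nat_mult)
        then have "cmod (exp w - 1) < 1/4" using K[OF k s] by simp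
        then have "cmod w < 1 \<or> cmod w > 2" by (rule exp_near1)
        then show "w \<in> ball 0 1 \<union> - cball 0 2" by auto
      qed
      have dis: "ball 0 1 \<inter> (- cball 0 2) \<inter> ?S = {}" by auto
      have "ball 0 1 \<inter> ?S = {} \<or> (- cball 0 2) \<inter> ?S = {}"
        by (rule connectedD[OF cS _ _ dis sub]) auto
      moreover have "0 \<in> ball 0 1 \<inter> ?S" using zU h0 by (auto intro!: image_eqI[of 0 _ 0])
      ultimately have "(- cball 0 2) \<inter> ?S = {}" by blast
      then have "?S \<subseteq> ball 0 1" using sub by blast
      moreover have "?f t \<in> ?S" using tU by blast
      ultimately have "?f t \<in> ball 0 1" by blast
      then show ?thesis by simp
    qed
    have "cmod (h t) \<le> 0"
    proof (rule tendsto_le[OF trivial_limit_sequentially invr tendsto_const])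
      show "\<forall>\<^sub>F k in sequentially. cmod (h t) \<le> inverse (real (r k))"
      proof (rule eventually_sequentiallyI[of "Suc K"])
        fix k assume k: "Suc K \<le> k"
        then have rk: "real (r k) > 0" using rpos[of k] by simp
        have "real (r k) * cmod (h t) < 1" using small[of k] k by (simp add: norm_mult)
        then show "cmod (h t) \<le> inverse (real (r k))" using rk
          by (simp add: field_simps)
      qed
    qed
    then have "h t = 0" by simp
    then have "a t = 1" using ha[OF tU] by simp
    then show "char \<nu> t = char \<mu> t" unfolding a_def using nz[OF tU] by simp
  qed
qed


theorem lemma2p1:
  fixes \<mu> :: "real measure" and \<alpha> :: real and r :: "nat \<Rightarrow> nat"
  assumes "real_distribution \<mu>"
    and "\<alpha> > 0"
    and "strict_mono r"
    and "\<And>k. measure (conv_pow \<mu> (r k)) {..<0} \<le> exp (- \<alpha> * real (r k))"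
  shows "(\<forall>t. cmod (char \<mu> t) > exp (- \<alpha>) \<longrightarrow>
           (\<exists>z :: nat \<Rightarrow> complex.
              (\<forall>\<^sub>F k in sequentially. z k ^ r k = pos_char \<mu> (r k) t) \<and>
              z \<longlonglongrightarrow> char \<mu> t))
      \<and> (\<exists>U. open U \<and> 0 \<in> U \<and>
           (\<forall>\<nu>. real_distribution \<nu> \<longrightarrow>
              (\<forall>k. \<forall>A \<in> sets borel. A \<subseteq> {0..} \<longrightarrow>
                  measure (conv_pow \<nu> (r k)) A = measure (conv_pow \<mu> (r k)) A) \<longrightarrow>
              (\<forall>t\<in>U. char \<nu> t = char \<mu> t)))"
  using part1[OF assms] part2[OF assms] by blast

end
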